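(* Let $f:[0,\infty)\to\mathbb{R}$ be differentiable, let $0<a<b<\infty$, and suppose $f'$ is Lebesgue integrable on $[a,b]$. Let $m\in(0,1]$ and $q>1$, and suppose $|f'|^q$ is $(1,m)$-GA-convex on $[0,\max\{a^{1/m},b\}]$. Then \[ \biggl|\frac{b^2f(b)-a^2f(a)}{2}-\int_a^b xf(x)\,dx\biggr|\le\frac{\ln b-\ln a}{2^{1+1/q}}\bigl[L\bigl(a^{3q/(q-1)},b^{3q/(q-1)}\bigr)\bigr]^{1-1/q}\Bigl[|f'(b)|^q+m\bigl|f'(a^{1/m})\bigr|^q\Bigr]^{1/q}. \]
   Context: For $c>0$, $h:[0,c]\to\mathbb{R}$ and $(\alpha,m)\in(0,1]^2$, $h$ is called $(\alpha,m)$-GA-convex on $[0,c]$ if $h\bigl(x^\lambda y^{m(1-\lambda)}\bigr)\le\lambda^\alpha h(x)+m(1-\lambda^\alpha)h(y)$ for all $x,y\in[0,c]$ and all $\lambda\in[0,1]$ (with the convention $0^0=1$). For $x,y>0$, $x\neq y$, the logarithmic mean is $L(x,y)=\frac{y-x}{\ln y-\ln x}$. *)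

theory Defs
  imports "HOL-Analysis.Analysis"
begin

text \<open>Real power with the convention 0^0 = 1 (Isabelle's powr has 0 powr 0 = 0).\<close>
definition gpow :: "real \<Rightarrow> real \<Rightarrow> real" where
  "gpow x e = (if e = 0 then 1 else x powr e)"

definition GA_convex :: "real \<Rightarrow> real \<Rightarrow> real \<Rightarrow> (real \<Rightarrow> real) \<Rightarrow> bool" where
  "GA_convex \<alpha> m c h \<longleftrightarrow>
     (\<forall>x\<in>{0..c}. \<forall>y\<in>{0..c}. \<forall>t\<in>{0..1}.
        h (gpow x t * gpow y (m * (1 - t)))
          \<le> gpow t \<alpha> * h x + m * (1 - gpow t \<alpha>) * h y)"

definition logmean :: "real \<Rightarrow> real \<Rightarrow> real" where
  "logmean x y = (y - x) / (ln y - ln x)"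

end

theory Submission
  imports Defs
begin

lemma ftc_real:
  fixes F F' :: "real \<Rightarrow> real"
  assumes "a \<le> b" "\<And>x. x \<in> {a..b} \<Longrightarrow> (F has_real_derivative F' x) (at x)"
  shows "(F' has_integral (F b - F a)) {a..b}"
  using assms
  by (intro fundamental_theorem_of_calculus)
     (auto simp: has_real_derivative_iff_has_vector_derivative[symmetric] intro: has_field_derivative_at_within)

lemma int_powr:
  fixes a b r :: real
  assumes "0 < a" "a \<le> b" "r \<noteq> 0"
  shows "((\<lambda>x. x powr (r - 1)) has_integral (b powr r - a powr r) / r) {a..b}"
proof -
  have "((\<lambda>x. x powr r / r) has_real_derivative x powr (r - 1)) (at x)" if "x \<in> {a..b}" for x
  proof -
    have "x > 0" using that assms by auto
    from has_real_derivative_powr[OF this, of r] show ?thesis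
      using assms \<open>x > 0\<close> by (auto intro!: derivative_eq_intros)
  qed
  from ftc_real[OF assms(2) this] show ?thesis by (simp add: diff_divide_distrib)
qed

theorem corollary3p4:
  fixes f f' :: "real \<Rightarrow> real" and a b m q :: real
  assumes deriv: "\<And>x. x \<ge> 0 \<Longrightarrow> (f has_real_derivative f' x) (at x within {0..})"
    and ab: "0 < a" "a < b"
    and int: "set_integrable lborel {a..b} f'"
    and m: "0 < m" "m \<le> 1"
    and q: "q > 1"
    and conv: "GA_convex 1 m (max (a powr (1/m)) b) (\<lambda>x. \<bar>f' x\<bar> powr q)"
  shows "\<bar>(b\<^sup>2 * f b - a\<^sup>2 * f a) / 2 - integral {a..b} (\<lambda>x. x * f x)\<bar>
    \<le> (ln b - ln a) / 2 powr (1 + 1/q)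
       * (logmean (a powr (3*q/(q-1))) (b powr (3*q/(q-1)))) powr (1 - 1/q)
       * (\<bar>f' b\<bar> powr q + m * \<bar>f' (a powr (1/m))\<bar> powr q) powr (1/q)"
proof -
  define p where "p = q/(q-1)"
  have p1: "p > 1" using q by (simp add: p_def field_simps)
  have pq: "1/p + 1/q = 1" and pq': "1/p = 1 - 1/q" using q by (auto simp: p_def field_simps)
  have e3: "3*q/(q-1) = 3*p" by (simp add: p_def)
  define D where "D = ln b - ln a"
  have Dpos: "D > 0" using ab by (simp add: D_def)
  define h where "h = (\<lambda>x. \<bar>f' x\<bar> powr q)"
  have h0: "\<And>x. h x \<ge> 0" by (simp add: h_def)
  define Y where "Y = a powr (1/m)"
  define S where "S = h b + m * h Y"
  have S0: "S \<ge> 0" using h0 m by (simp add: S_def)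
  define s where "s = (\<lambda>x. (ln x - ln a)/D)"
  define L where "L = logmean (a powr (3*p)) (b powr (3*p))"
  define A where "A = (b powr (3*p) - a powr (3*p))/(3*p)"
  define B where "B = D*S/2"
  have lt: "a powr (3*p) < b powr (3*p)" using ab p1 by (intro powr_less_mono2) auto
  have AL: "A = D*L"
    using ab p1 lt by (simp add: A_def L_def logmean_def D_def field_simps)
  have Apos: "A > 0" using lt p1 by (simp add: A_def)
  have L0: "L \<ge> 0" using AL Apos Dpos by (simp add: zero_less_mult_iff)
  have hbound: "h x \<le> s x * h b + m*(1 - s x) * h Y" if x: "x \<in> {a..b}" for x
  proof -
    have xpos: "x > 0" using x ab by auto
    have s01: "s x \<in> {0..1}"
      using x ab Dpos by (auto simp: s_def D_def field_simps)
    have Y0: "Y \<ge> 0" by (simp add: Y_def)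
    have "h (gpow b (s x) * gpow Y (m * (1 - s x))) \<le> gpow (s x) 1 * h b + m * (1 - gpow (s x) 1) * h Y"
      using conv s01 Y0 ab unfolding GA_convex_def h_def by (auto simp: Y_def)
    moreover have "gpow (s x) 1 = s x" using s01 by (simp add: gpow_def powr_one)
    moreover have "gpow b (s x) = b powr (s x)" using ab by (simp add: gpow_def)
    moreover have "gpow Y (m * (1 - s x)) = a powr (1 - s x)"
      using ab m by (simp add: gpow_def Y_def powr_powr)
    moreover have "b powr (s x) * a powr (1 - s x) = x"
    proof -
      have sD: "s x * D = ln x - ln a" using Dpos by (simp add: s_def)
      have "s x * ln b + (1 - s x) * ln a = ln x"
        using sD by (simp add: D_def algebra_simps)
      then show ?thesis using ab xpos
        by (simp add: powr_def exp_add[symmetric])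
    qed
    ultimately show ?thesis by simp
  qed
  define G where "G = (\<lambda>x. (s x * h b + m*(1 - s x)*h Y)/x)"
  have intG: "(G has_integral B) {a..b}"
  proof -
    define F where "F = (\<lambda>x. D*(h b * ((ln x - ln a)/D)^2/2 + m*h Y*((ln x - ln a)/D - ((ln x - ln a)/D)^2/2)))"
    have "(F has_real_derivative G x) (at x)" if "x \<in> {a..b}" for x
    proof -
      have "x > 0" using that ab by auto
      have Dn: "D \<noteq> 0" using Dpos by simp
      show ?thesis unfolding F_def
        using Dn \<open>x > 0\<close> by (auto intro!: derivative_eq_intros simp: G_def s_def field_simps power2_eq_square)
    qed
    from ftc_real[OF _ this] ab have "(G has_integral F b - F a) {a..b}" by auto
    moreover have "F b - F a = B"
    proof -
      have lb: "ln b = ln a + D" by (simp add: D_def)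
      show ?thesis using Dpos by (simp add: F_def B_def S_def lb field_simps power2_eq_square)
    qed
    ultimately show ?thesis by simp
  qed
  have intP: "((\<lambda>x. x powr (3*p - 1)) has_integral A) {a..b}"
    using int_powr[of a b "3*p"] ab p1 by (simp add: A_def)
  have contf: "continuous_on {a..b} f"
  proof -
    have "continuous (at x within {a..b}) f" if "x \<in> {a..b}" for x
    proof -
      have "(f has_real_derivative f' x) (at x within {a..b})"
        using deriv[of x] that ab by (auto intro: has_field_derivative_subset)
      then show ?thesis by (rule DERIV_continuous)
    qed
    then show ?thesis
      by (auto simp: continuous_on_eq_continuous_within)
  qed
  have intxf: "(\<lambda>x. x * f x) integrable_on {a..b}"
    by (intro integrable_continuous_real continuous_intros contf)
  have ibp: "((\<lambda>x. x * f x + x^2 * f' x / 2) has_integral (b^2*f b/2 - a^2*f a/2)) {a..b}"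
  proof -
    have "((\<lambda>x. x^2 * f x / 2) has_vector_derivative (x * f x + x^2 * f' x / 2)) (at x within {a..b})"
      if "x \<in> {a..b}" for x
    proof -
      have d: "(f has_real_derivative f' x) (at x within {a..b})"
        using deriv[of x] that ab by (auto intro: has_field_derivative_subset)
      show ?thesis unfolding has_real_derivative_iff_has_vector_derivative[symmetric]
        by (auto intro!: derivative_eq_intros d simp: field_simps power2_eq_square)
    qed
    from fundamental_theorem_of_calculus[OF _ this] ab show ?thesis by simp
  qed
  have I: "((\<lambda>x. x^2 * f' x / 2) has_integral
      ((b^2*f b - a^2*f a)/2 - integral {a..b} (\<lambda>x. x*f x))) {a..b}"
    using has_integral_diff[OF ibp integrable_integral[OF intxf]] by (simp add: diff_divide_distrib)
  define C where "C = A powr (1/p) * B powr (1/q)"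
  have bound: "\<bar>integral {a..b} (\<lambda>x. x^2 * f' x / 2)\<bar> \<le> C / 2"
  proof (cases "S = 0")
    case True
    then have "h b = 0" "h Y = 0" using h0[of b] h0[of Y] m by (auto simp: S_def add_nonneg_eq_0_iff)
    then have "f' x = 0" if "x \<in> {a..b}" for x
      using hbound[OF that] h0[of x] by (auto simp: h_def)
    then have "norm (integral {a..b} (\<lambda>x. x^2 * f' x / 2)) \<le> integral {a..b} (\<lambda>x. 0::real)"
      using I by (intro integral_norm_bound_integral) auto
    moreover have "C \<ge> 0" by (simp add: C_def)
    ultimately show ?thesis by simp
  next
    case False
    then have Spos: "S > 0" using S0 by simp
    then have Bpos: "B > 0" using Dpos by (simp add: B_def)
    define K where "K = (\<lambda>x. C * (x powr (3*p - 1) / (p*A) + G x / (q*B)) / 2)"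
    have Kint: "(K has_integral C / 2) {a..b}"
    proof -
      have "(K has_integral C * (A / (p*A) + B / (q*B)) / 2) {a..b}"
        unfolding K_def
        by (intro has_integral_divide has_integral_mult_right has_integral_add
            has_integral_divide intP intG)
      moreover have "C * (A / (p*A) + B / (q*B)) / 2 = C / 2"
        using Apos Bpos pq by simp
      ultimately show ?thesis by metis
    qed
    have pw: "norm (x^2 * f' x / 2) \<le> K x" if x: "x \<in> {a..b}" for x
    proof -
      have xpos: "x > 0" using x ab by auto
      define u where "u = x powr (3 - 1/p) / A powr (1/p)"
      define v where "v = \<bar>f' x\<bar> * x powr (-1/q) / B powr (1/q)"
      have u0: "u \<ge> 0" and v0: "v \<ge> 0" by (auto simp: u_def v_def)
      have y: "u * v \<le> u powr p / p + v powr q / q"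
        using Youngs_inequality[OF p1 q pq u0 v0] .
      have ex: "(3 - 1/p) * p = 3*p - 1" using p1 by (simp add: field_simps)
      have up: "u powr p = x powr (3*p - 1) / A"
        using p1 Apos xpos by (simp add: u_def powr_divide powr_powr ex)
      have vq: "v powr q = h x / (x * B)"
        using q Bpos xpos
        by (simp add: v_def h_def powr_divide powr_mult powr_powr powr_minus field_simps)
      have hG: "h x / x \<le> G x"
        using hbound[OF x] xpos by (simp add: G_def divide_right_mono)
      have uv: "u * v = \<bar>f' x\<bar> * x^2 / C"
      proof -
        have "x powr (3 - 1/p) * x powr (-1/q) = x powr 2"
          using pq by (simp add: powr_add[symmetric] algebra_simps)
        also have "\<dots> = x^2" using xpos powr_realpow[of x 2] by simp
        finally show ?thesis
          by (simp add: u_def v_def C_def field_simps)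
      qed
      have Cpos: "C > 0" using Apos Bpos by (simp add: C_def)
      have "\<bar>f' x\<bar> * x^2 / C \<le> x powr (3*p - 1) / (p*A) + G x / (q*B)"
      proof -
        have "v powr q / q \<le> G x / (q*B)"
          using hG q Bpos xpos by (simp add: vq field_simps divide_right_mono)
        then show ?thesis using y uv up by (simp add: field_simps)
      qed
      then have "\<bar>f' x\<bar> * x^2 \<le> C * (x powr (3*p - 1) / (p*A) + G x / (q*B))"
        using Cpos by (simp add: field_simps)
      then show ?thesis by (simp add: K_def abs_mult mult.commute)
    qed
    have "norm (integral {a..b} (\<lambda>x. x^2 * f' x / 2)) \<le> integral {a..b} K"
      using I Kint pw by (intro integral_norm_bound_integral) auto
    then show ?thesis using Kint by (simp add: integral_unique)
  qed
  have eqC: "C / 2 = D / 2 powr (1 + 1/q) * L powr (1 - 1/q) * S powr (1/q)"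
  proof -
    have "C = (D*L) powr (1 - 1/q) * (D*S/2) powr (1/q)"
      by (simp add: C_def AL B_def pq')
    also have "\<dots> = (D powr (1 - 1/q) * D powr (1/q)) * L powr (1 - 1/q) * S powr (1/q) / 2 powr (1/q)"
      using Dpos L0 S0 by (simp add: powr_mult powr_divide)
    also have "D powr (1 - 1/q) * D powr (1/q) = D"
      using Dpos by (simp add: powr_add[symmetric])
    finally show ?thesis by (simp add: powr_add field_simps)
  qed
  have E: "(b\<^sup>2 * f b - a\<^sup>2 * f a) / 2 - integral {a..b} (\<lambda>x. x * f x)
        = integral {a..b} (\<lambda>x. x^2 * f' x / 2)"
    using integral_unique[OF I] by simp
  have "\<bar>(b\<^sup>2 * f b - a\<^sup>2 * f a) / 2 - integral {a..b} (\<lambda>x. x * f x)\<bar> \<le> C / 2"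
    unfolding E by (rule bound)
  also note eqC
  finally show ?thesis
    unfolding e3 L_def D_def S_def h_def Y_def .
qed

end
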